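(* Let $n\ge 1$. If $p(4,n)\neq 0$, then $n=8t$ or $n=8t-1$ for some integer $t\ge 2$.
   Context: For integers $m\ge 2$, $n\ge 1$, a valid $(m,n)$-sequence is a sequence $(a_1,\dots,a_{mn})$ with entries in $\{1,\dots,n\}$ in which each $k\in\{1,\dots,n\}$ occurs exactly $m$ times, and such that any two consecutive occurrences of $k$ are separated by exactly $k$ other terms; equivalently, there is an index $\theta_k$ such that $k$ occurs exactly at the positions $\theta_k,\ \theta_k+(k+1),\ \dots,\theta_k+(m-1)(k+1)$ (all in $\{1,\dots,mn\}$). The reversal of a valid sequence is again valid; $p(m,n)$ denotes the number of valid $(m,n)$-sequences counted up to reversal (i.e. the number of equivalence classes of valid sequences under identifying a sequence with its reversal). *)

theory Defs
  imports Main
begin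

text \<open>A valid (m,n)-sequence, represented as a list a of length m*n (position i of the
  paper is list index i-1).\<close>
definition valid_seq :: "nat \<Rightarrow> nat \<Rightarrow> nat list \<Rightarrow> bool" where
  "valid_seq m n a \<longleftrightarrow>
     length a = m * n \<and> set a \<subseteq> {1..n} \<and>
     (\<forall>k\<in>{1..n}. \<exists>\<theta>.
        {i. i < length a \<and> a ! i = k} = {\<theta> + j * (k + 1) | j. j < m})"

definition p :: "nat \<Rightarrow> nat \<Rightarrow> nat" where
  "p m n = card ((\<lambda>a. {a, rev a}) ` {a. valid_seq m n a})"

end

theory Submission
  imports Defs
begin

lemma card4_a3: "(\<Sum>j::nat<4. if Q j then 1 else (0::nat)) = (if Q 0 then 1 else 0) + (if Q 1 then 1 else 0) + (if Q 2 then 1 else 0) + (if Q 3 then 1 else 0)"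
proof -
  have "{..<4::nat} = {0,1,2,3}" by auto
  then show ?thesis by simp
qed

lemma card4: "card {j::nat. j<4 \<and> Q j} = (if Q 0 then 1 else 0) + (if Q 1 then 1 else 0) + (if Q 2 then 1 else 0) + (if Q 3 then 1 else 0)"
proof -
  have a1: "{j::nat. j<4 \<and> Q j} = {j\<in>{..<4}. Q j}" by blast
  have "card {j::nat. j<4 \<and> Q j} = (\<Sum>j::nat<4. if Q j then 1 else (0::nat))"
    unfolding a1 card_eq_sum by (rule sum.inter_filter[OF finite_lessThan])
  also have "\<dots> = (if Q 0 then 1 else 0) + (if Q 1 then 1 else 0) + (if Q 2 then 1 else 0) + (if Q 3 then 1 else 0)"
    by (rule card4_a3)
  finally show ?thesis .
qed

definition F :: "nat \<Rightarrow> nat \<Rightarrow> nat \<Rightarrow> nat" where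
 "F x y r = (if x mod 4 = r then 1 else 0) + (if (x+y) mod 4 = r then 1 else 0) + (if (x+2*y) mod 4 = r then 1 else 0) + (if (x+3*y) mod 4 = r then 1 else 0)"

lemma Fc: assumes "x < 4" "y < 4"
  shows "(int (F x y 0) - int (F x y 1)) mod 4 = (if y = 2 then 2 else 0) \<and> F x y 0 mod 2 = (if odd y then 1 else 0)"
proof -
  have "x = 0 \<or> x = 1 \<or> x = 2 \<or> x = 3" "y = 0 \<or> y = 1 \<or> y = 2 \<or> y = 3" using assms by auto
  then show ?thesis by (elim disjE) (simp_all add: F_def)
qed

lemma cardF: "card {j::nat. j<4 \<and> (x + j*y) mod 4 = r} = F x y r"
  unfolding card4 F_def by (simp only: mult_zero_left add_0_right mult.left_neutral)

lemma res_conc: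
  assumes "x < 4" "y < 4"
  shows "(int (card {j::nat. j<4 \<and> (x + j*y) mod 4 = 0}) - int (card {j::nat. j<4 \<and> (x + j*y) mod 4 = 1})) mod 4 = (if y = 2 then 2 else 0) \<and> card {j::nat. j<4 \<and> (x + j*y) mod 4 = 0} mod 2 = (if odd y then 1 else 0)"
  unfolding cardF using Fc[OF assms] .

lemma res:
  fixes t d :: nat
  shows "(int (card {j. j<4 \<and> (t + j*d) mod 4 = 0}) - int (card {j. j<4 \<and> (t + j*d) mod 4 = 1})) mod 4 = (if d mod 4 = 2 then 2 else 0)
    \<and> card {j. j<4 \<and> (t + j*d) mod 4 = 0} mod 2 = (if odd d then 1 else 0)"
proof -
  have e: "(t + j*d) mod 4 = (t mod 4 + j*(d mod 4)) mod 4" for j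
  proof -
    have "(t mod 4 + j*(d mod 4)) mod 4 = (t mod 4 + (j*(d mod 4)) mod 4) mod 4" by (rule mod_add_right_eq[symmetric])
    also have "(j*(d mod 4)) mod 4 = (j*d) mod 4" by (rule mod_mult_right_eq)
    also have "(t mod 4 + (j*d) mod 4) mod 4 = (t + (j*d) mod 4) mod 4" by (rule mod_add_left_eq)
    also have "(t + (j*d) mod 4) mod 4 = (t + j*d) mod 4" by (rule mod_add_right_eq)
    finally show ?thesis by (rule sym)
  qed
  have o: "odd d = odd (d mod 4)" by (simp add: odd_iff_mod_2_eq_one mod_mod_cancel)
  show ?thesis unfolding e o by (rule res_conc) simp_all
qed

lemma step1: "(Suc n + 3) div 4 = (n+3) div 4 + (if (Suc n + 1) mod 4 = 2 then 1 else 0)"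
  by presburger

lemma step2: "Suc n div 2 = n div 2 + (if odd (Suc n+1) then 1 else 0)"
  by (auto simp: div_Suc)

lemma sum_even: "(\<Sum>k\<in>{1..n}. if odd (k+1) then 1 else 0 :: nat) = n div 2"
proof (induction n)
  case 0 show ?case by simp
next
  case (Suc n)
  have "(\<Sum>k\<in>{1..Suc n}. if odd (k+1) then 1 else 0 :: nat) = n div 2 + (if odd (Suc n+1) then 1 else 0)"
    using Suc by simp
  then show ?case by (simp only: step2)
qed

lemma sum_one: "(\<Sum>k\<in>{1..n}. if (k+1) mod 4 = 2 then 2 else 0 :: int) = 2 * int ((n+3) div 4)"
proof (induction n)
  case 0 show ?case by simp
next
  case (Suc n)
  have "(\<Sum>k\<in>{1..Suc n}. if (k+1) mod 4 = 2 then 2 else 0 :: int) = 2 * int ((n+3) div 4) + (if (Suc n+1) mod 4 = 2 then 2 else 0)"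
    using Suc by simp
  then show ?case by (simp only: step1) simp
qed

lemma card_class: assumes "r < 4" shows "card {i::nat. i < 4*n \<and> i mod 4 = r} = n"
proof -
  have "{i::nat. i < 4*n \<and> i mod 4 = r} = (\<lambda>j. 4*j + r) ` {..<n}"
  proof
    show "{i::nat. i < 4*n \<and> i mod 4 = r} \<subseteq> (\<lambda>j. 4*j + r) ` {..<n}"
    proof
      fix i assume "i \<in> {i::nat. i < 4*n \<and> i mod 4 = r}"
      then have "i = 4*(i div 4) + r" "i div 4 < n" by auto
      then show "i \<in> (\<lambda>j. 4*j + r) ` {..<n}" by blast
    qed
    show "(\<lambda>j. 4*j + r) ` {..<n} \<subseteq> {i::nat. i < 4*n \<and> i mod 4 = r}" using assms by auto
  qed
  moreover have "inj_on (\<lambda>j::nat. 4*j + r) {..<n}" by (auto simp: inj_on_def)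
  ultimately show ?thesis by (simp add: card_image)
qed

lemma l1: "(2 * int q) mod 4 = 0 \<Longrightarrow> even q" by presburger

lemma m1: "(4*q + c) mod 2 = (c::nat) mod 2" by presburger
lemma m2: "even (2*q + c) = even (c::nat)" by presburger
lemma l2core: assumes "s < (8::nat)" "s mod 2 = (4*q + s div 2) mod 2" "even (2*q + (s+3) div 4)" shows "s = 0 \<or> s = 7"
proof -
  have "s = 0 \<or> s = 1 \<or> s = 2 \<or> s = 3 \<or> s = 4 \<or> s = 5 \<or> s = 6 \<or> s = 7" using assms(1) by presburger
  moreover have "s mod 2 = (s div 2) mod 2" using assms(2) unfolding m1 .
  moreover have "even ((s+3) div 4)" using assms(3) unfolding m2 .
  ultimately show ?thesis by (elim disjE) simp_all
qed

lemma l2: assumes "(n::nat) mod 2 = (n div 2) mod 2" "even ((n+3) div 4)" shows "n mod 8 = 0 \<or> n mod 8 = 7"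
proof -
  define q s where "q = n div 8" and "s = n mod 8"
  have n: "n = 8*q + s" "s < 8" unfolding q_def s_def by simp_all
  have a: "n div 2 = 4*q + s div 2" "(n+3) div 4 = 2*q + (s+3) div 4" unfolding n(1) by simp_all
  have a2: "n mod 2 = s mod 2" unfolding s_def by (simp add: mod_mod_cancel)
  have "s = 0 \<or> s = 7" using l2core[OF n(2), of q] assms unfolding a a2 by simp
  then show ?thesis unfolding s_def .
qed

lemma l3: assumes "(n::nat) \<ge> 1" "n mod 8 = 0 \<or> n mod 8 = 7" "n \<noteq> 7" "n \<noteq> 8" shows "\<exists>t::nat. t \<ge> 2 \<and> (n = 8 * t \<or> n = 8 * t - 1)"
proof -
  define q s where "q = n div 8" and "s = n mod 8"
  have n: "n = 8*q + s" unfolding q_def s_def by simp_all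
  from assms(2) have "s = 0 \<or> s = 7" unfolding s_def .
  then show ?thesis
  proof
    assume "s = 0" then show ?thesis using assms n by (intro exI[of _ q]) auto
  next
    assume "s = 7" then show ?thesis using assms n by (intro exI[of _ "q+1"]) auto
  qed
qed

lemma counting:
  fixes a :: "nat list" and \<theta> :: "nat \<Rightarrow> nat" and n :: nat
  assumes len: "length a = 4*n" and sa: "set a \<subseteq> {1..n}"
    and pos: "\<And>k. k \<in> {1..n} \<Longrightarrow> {i. i < length a \<and> a!i = k} = {\<theta> k + j*(k+1) | j. j < 4}"
  shows "n mod 8 = 0 \<or> n mod 8 = 7"
proof -
  define c where "c r k = card {j::nat. j<4 \<and> (\<theta> k + j*(k+1)) mod 4 = r}" for r k
  have fk: "card {i. i < 4*n \<and> a!i = k \<and> i mod 4 = r} = c r k" if "k \<in> {1..n}" for r k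
  proof -
    have e: "(i < 4*n \<and> a!i = k) = (\<exists>j<4. i = \<theta> k + j*(k+1))" for i
    proof -
      from pos[OF that] have "i \<in> {i. i < length a \<and> a!i = k} \<longleftrightarrow> i \<in> {\<theta> k + j*(k+1) | j. j < 4}" by simp
      then show ?thesis using len by auto
    qed
    have "{i. i < 4*n \<and> a!i = k \<and> i mod 4 = r} = (\<lambda>j. \<theta> k + j*(k+1)) ` {j. j<4 \<and> (\<theta> k + j*(k+1)) mod 4 = r}"
    proof (intro set_eqI iffI)
      fix i assume "i \<in> {i. i < 4*n \<and> a!i = k \<and> i mod 4 = r}"
      then obtain j where "j<4" "i = \<theta> k + j*(k+1)" "i mod 4 = r" using e by blast
      then show "i \<in> (\<lambda>j. \<theta> k + j*(k+1)) ` {j. j<4 \<and> (\<theta> k + j*(k+1)) mod 4 = r}" by blast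
    next
      fix i assume "i \<in> (\<lambda>j. \<theta> k + j*(k+1)) ` {j. j<4 \<and> (\<theta> k + j*(k+1)) mod 4 = r}"
      then obtain j where "j<4" "(\<theta> k + j*(k+1)) mod 4 = r" "i = \<theta> k + j*(k+1)" by blast
      then show "i \<in> {i. i < 4*n \<and> a!i = k \<and> i mod 4 = r}" using e by blast
    qed
    moreover have "inj_on (\<lambda>j. \<theta> k + j*(k+1)) A" for A
      by (rule strict_mono_imp_inj_on) (metis strict_monoI add_less_cancel_left mult_less_mono1 zero_less_Suc Suc_eq_plus1)
    ultimately show ?thesis by (simp add: c_def card_image)
  qed
  have tot: "(\<Sum>k\<in>{1..n}. c r k) = n" if "r<4" for r
  proof -
    have ai: "\<forall>i<4*n. a!i \<in> {1..n}" using sa len nth_mem by force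
    have U: "{i. i < 4*n \<and> i mod 4 = r} = (\<Union>k\<in>{1..n}. {i. i < 4*n \<and> a!i = k \<and> i mod 4 = r})"
      using ai by auto
    have "card {i. i < 4*n \<and> i mod 4 = r} = (\<Sum>k\<in>{1..n}. card {i. i < 4*n \<and> a!i = k \<and> i mod 4 = r})"
      unfolding U by (rule card_UN_disjoint) auto
    thus ?thesis using card_class[OF that] fk by simp
  qed
  have A: "n mod 2 = (n div 2) mod 2"
  proof -
    have "n mod 2 = (\<Sum>k\<in>{1..n}. c 0 k) mod 2" using tot[of 0] by simp
    also have "\<dots> = (\<Sum>k\<in>{1..n}. c 0 k mod 2) mod 2" by (simp add: mod_sum_eq)
    also have "(\<Sum>k\<in>{1..n}. c 0 k mod 2) = (\<Sum>k\<in>{1..n}. if odd (k+1) then 1 else 0)"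
      by (intro sum.cong refl) (unfold c_def, rule res[THEN conjunct2])
    also have "\<dots> = n div 2" by (rule sum_even)
    finally show ?thesis .
  qed
  have B: "(2 * int ((n+3) div 4)) mod 4 = 0"
  proof -
    have "(\<Sum>k\<in>{1..n}. int (c 0 k) - int (c 1 k)) = 0"
      using tot[of 0] tot[of 1] by (simp add: sum_subtractf flip: of_nat_sum)
    then have "0 = (\<Sum>k\<in>{1..n}. int (c 0 k) - int (c 1 k)) mod 4" by simp
    also have "\<dots> = (\<Sum>k\<in>{1..n}. (int (c 0 k) - int (c 1 k)) mod 4) mod 4" by (simp add: mod_sum_eq)
    also have "(\<Sum>k\<in>{1..n}. (int (c 0 k) - int (c 1 k)) mod 4) = (\<Sum>k\<in>{1..n}. if (k+1) mod 4 = 2 then 2 else 0)"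
      by (intro sum.cong refl) (unfold c_def, rule res[THEN conjunct1])
    also have "\<dots> = 2 * int ((n+3) div 4)" by (rule sum_one)
    finally show ?thesis by simp
  qed
  have "even ((n+3) div 4)" using B by (rule l1)
  with A show ?thesis by (rule l2)
qed


fun ok :: "nat \<Rightarrow> nat list \<Rightarrow> nat list \<Rightarrow> bool" where
  "ok L [] occ = True"
| "ok L (k#ks) occ = list_ex (\<lambda>th. if th \<notin> set occ \<and> th+(k+1) \<notin> set occ
     \<and> th+2*(k+1) \<notin> set occ \<and> th+3*(k+1) \<notin> set occ
     then ok L ks (th # (th+(k+1)) # (th+2*(k+1)) # (th+3*(k+1)) # occ) else False) [0..<L - 3*(k+1)]"

definition Pk :: "(nat \<Rightarrow> nat) \<Rightarrow> nat \<Rightarrow> nat set" where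
  "Pk \<theta> k = {\<theta> k, \<theta> k + (k+1), \<theta> k + 2*(k+1), \<theta> k + 3*(k+1)}"

lemma ok_complete:
  "distinct ks \<Longrightarrow> (\<forall>k\<in>set ks. \<theta> k + 3*(k+1) < L) \<Longrightarrow>
   (\<forall>k\<in>set ks. \<forall>k'\<in>set ks. k \<noteq> k' \<longrightarrow> Pk \<theta> k \<inter> Pk \<theta> k' = {}) \<Longrightarrow>
   (\<forall>k\<in>set ks. Pk \<theta> k \<inter> set occ = {}) \<Longrightarrow> ok L ks occ"
proof (induction ks arbitrary: occ)
  case Nil
  then show ?case by simp
next
  case (Cons k ks)
  let ?occ = "\<theta> k # (\<theta> k+(k+1)) # (\<theta> k+2*(k+1)) # (\<theta> k+3*(k+1)) # occ"
  have "ok L ks ?occ"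
  proof (rule Cons.IH)
    show "distinct ks" using Cons.prems(1) by simp
    show "\<forall>k\<in>set ks. \<theta> k + 3*(k+1) < L" using Cons.prems(2) by simp
    show "\<forall>k\<in>set ks. \<forall>k'\<in>set ks. k \<noteq> k' \<longrightarrow> Pk \<theta> k \<inter> Pk \<theta> k' = {}" using Cons.prems(3) by simp
    show "\<forall>k'\<in>set ks. Pk \<theta> k' \<inter> set ?occ = {}"
    proof
      fix k' assume k': "k' \<in> set ks"
      then have "k' \<noteq> k" using Cons.prems(1) by auto
      then have "Pk \<theta> k' \<inter> Pk \<theta> k = {}" using Cons.prems(3) k' by simp
      moreover have "Pk \<theta> k' \<inter> set occ = {}" using Cons.prems(4) k' by simp
      ultimately show "Pk \<theta> k' \<inter> set ?occ = {}" unfolding Pk_def[of \<theta> k] by auto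
    qed
  qed
  note o = this
  have m: "\<theta> k \<in> set [0..<L - 3*(k+1)]"
  proof -
    have "\<theta> k + 3*(k+1) < L" using Cons.prems(2) by simp
    then show ?thesis by (simp add: less_diff_conv)
  qed
  have c: "\<theta> k \<notin> set occ \<and> \<theta> k+(k+1) \<notin> set occ \<and> \<theta> k+2*(k+1) \<notin> set occ \<and> \<theta> k+3*(k+1) \<notin> set occ"
    using Cons.prems(4) unfolding Pk_def by auto
  show ?case unfolding ok.simps list_ex_iff
    by (rule bexI[OF _ m]) (subst if_P[OF c], rule o)
qed

lemma no7: "\<not> ok (4*7) (rev [1..<7+1]) []" by code_simp
lemma no8: "\<not> ok (4*8) (rev [1..<8+1]) []" by code_simp

lemma setr: "set (rev [1..<n+1]) = {1..n}" by auto

lemma four_set: "{t + j*d | j::nat. j<4} = {t, t+d, t+2*d, t+3*d}"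
proof -
  have "{..<4::nat} = {0,1,2,3}" by auto
  moreover have "{t + j*d | j::nat. j<4} = (\<lambda>j. t+j*d) ` {..<4}" by auto
  ultimately show ?thesis by simp
qed

theorem proposition2:
  fixes n :: nat
  assumes "n \<ge> 1" and "p 4 n \<noteq> 0"
  shows "\<exists>t::nat. t \<ge> 2 \<and> (n = 8 * t \<or> n = 8 * t - 1)"
proof -
  have ne: "{a. valid_seq 4 n a} \<noteq> {}"
  proof
    assume e: "{a. valid_seq 4 n a} = {}"
    have "p 4 n = card ((\<lambda>a::nat list. {a, rev a}) ` {})" unfolding p_def e by (rule refl)
    with assms(2) show False by simp
  qed
  then obtain a where va: "valid_seq 4 n a" by blast
  have len: "length a = 4*n" and sa: "set a \<subseteq> {1..n}"
    and ex: "\<forall>k\<in>{1..n}. \<exists>t. {i. i < length a \<and> a ! i = k} = {t + j * (k + 1) | j. j < 4}"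
  proof -
    have vd: "length a = 4 * n \<and> set a \<subseteq> {1..n} \<and> (\<forall>k\<in>{1..n}. \<exists>t. {i. i < length a \<and> a ! i = k} = {t + j * (k + 1) | j. j < 4})"
      using va unfolding valid_seq_def .
    then show "length a = 4*n" "set a \<subseteq> {1..n}" "\<forall>k\<in>{1..n}. \<exists>t. {i. i < length a \<and> a ! i = k} = {t + j * (k + 1) | j. j < 4}"
      by blast+
  qed
  define \<theta> where "\<theta> k = (SOME t. {i. i < length a \<and> a ! i = k} = {t + j * (k + 1) | j. j < 4})" for k
  have pos: "{i. i < length a \<and> a!i = k} = {\<theta> k + j*(k+1) | j. j < 4}" if "k \<in> {1..n}" for k
  proof -
    from ex that obtain t where "{i. i < length a \<and> a ! i = k} = {t + j * (k + 1) | j. j < 4}" by blast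
    then show ?thesis unfolding \<theta>_def by (rule someI)
  qed
  have m8: "n mod 8 = 0 \<or> n mod 8 = 7" by (rule counting[OF len sa pos])
  have posP: "{i. i < 4*n \<and> a!i = k} = Pk \<theta> k" if "k \<in> {1..n}" for k
    using pos[OF that] len unfolding Pk_def four_set by simp
  have okn: "ok (4*n) (rev [1..<n+1]) []"
  proof (rule ok_complete)
    show "distinct (rev [1..<n+1])" by simp
    show "\<forall>k\<in>set (rev [1..<n+1]). \<theta> k + 3*(k+1) < 4*n"
    proof
      fix k assume "k \<in> set (rev [1..<n+1])"
      then have k: "k \<in> {1..n}" by auto
      have "\<theta> k + 3*(k+1) \<in> Pk \<theta> k" unfolding Pk_def by simp
      then show "\<theta> k + 3*(k+1) < 4*n" using posP[OF k] by blast
    qed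
    show "\<forall>k\<in>set (rev [1..<n+1]). \<forall>k'\<in>set (rev [1..<n+1]). k \<noteq> k' \<longrightarrow> Pk \<theta> k \<inter> Pk \<theta> k' = {}"
    proof (intro ballI impI)
      fix k k' assume "k \<in> set (rev [1..<n+1])" "k' \<in> set (rev [1..<n+1])" "k \<noteq> k'"
      then have k: "k \<in> {1..n}" "k' \<in> {1..n}" "k \<noteq> k'" unfolding setr by simp_all
      have "Pk \<theta> k \<inter> Pk \<theta> k' = {i. i < 4*n \<and> a!i = k} \<inter> {i. i < 4*n \<and> a!i = k'}"
        by (simp only: posP[OF k(1)] posP[OF k(2)])
      also have "\<dots> = {}" using k(3) by blast
      finally show "Pk \<theta> k \<inter> Pk \<theta> k' = {}" .
    qed
    show "\<forall>k\<in>set (rev [1..<n+1]). Pk \<theta> k \<inter> set [] = {}" by simp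
  qed
  have n7: "n \<noteq> 7"
  proof
    assume h: "n = 7"
    show False using okn no7 unfolding h by blast
  qed
  have n8: "n \<noteq> 8"
  proof
    assume h: "n = 8"
    show False using okn no8 unfolding h by blast
  qed
  show ?thesis by (rule l3[OF assms(1) m8 n7 n8])
qed

end
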